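(* For every packet $p\in\Pi$, every edge $e=(t,r)\in E(p)$ and every integer $\tau\ge r_p$, $$\mathrm{imp}(p,e)-d(e)\big(\beta_{t,\tau}+\beta_{r,\tau}\big)\;\le\;2\,w_p\,\big(\tau+\Delta(e)-r_p\big),$$ where $\mathrm{imp}(p,e)$ is the quantity computed when $p$ is processed by ALG.
   Context: Network. $S,T,R,D$ are pairwise disjoint finite sets (sources, transmitters, receivers, destinations). Each transmitter $t\in T$ is attached to a source $s(t)\in S$ via a link of integer delay $d(s(t),t)\ge 0$; each receiver $r\in R$ is attached to a destination $d(r)\in D$ via a link of integer delay $d(r,d(r))\ge 0$. A set $E_R\subseteq T\times R$ of reconfigurable edges is given, each $e\in E_R$ with integer delay $d(e)\ge 1$. A set $E_\ell\subseteq S\times D$ of fixed links is given, each with integer delay $\ge0$. For $e=(t,r)\in E_R$ put $\Delta(e)=d(s(t),t)+d(e)+d(r,d(r))$. Two edges of $E_R$ are adjacent if they share a transmitter or a receiver (an edge is adjacent to itself). Packets. $\Pi$ is a finite set of unit-size packets; packet $p$ has weight $w_p>0$, release time $r_p\in\mathbb Z_{\ge1}$, source $s_p$, destination $d_p$. Let $E(p)=\{(t,r)\in E_R: s(t)=s_p,\ d(r)=d_p\}$; assume $E(p)\neq\emptyset$ for all $p$. $\Pi_\ell$ is the set of packets with $(s_p,d_p)\in E_\ell$, and $\ell_p:=d(s_p,d_p)$ for them. Fix a total order $\prec$ on $\Pi$ with $r_p<r_q\Rightarrow p\prec q$. Algorithm ALG. Packets are processed in the order $\prec$; $p$ is processed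 at time $r_p$, before transmission step $r_p$. A packet assigned to a reconfigurable edge $e$ is split into $d(e)$ chunks of weight $w_p/d(e)$ assigned to $e$; $p(c)$, $w_c$, $e(c)$ denote the packet, weight and edge of chunk $c$. A chunk is pending until transmitted; $W(C)$ is the total weight of a set $C$ of chunks. When $p$ is processed, $B(p)$ is the set of pending chunks of packets $p'\prec p$; for $e=(t,r)\in E(p)$, $\mathrm{Adj}(p,e)$ = chunks of $B(p)$ whose edge is adjacent to $e$, $H(p,e)=\{c\in\mathrm{Adj}(p,e):w_c\ge w_p/d(e)\}$, $L(p,e)=\mathrm{Adj}(p,e)\setminus H(p,e)$, and $\mathrm{imp}(p,e)=w_p(d(s_p,t)+\frac{d(e)+1}{2}+d(r,d_p))+w_p|H(p,e)|+d(e)W(L(p,e))$. With $e^*\in\arg\min_{e\in E(p)}\mathrm{imp}(p,e)$: if $p\in\Pi_\ell$ and $w_p\ell_p\le\mathrm{imp}(p,e^* )$, $p$ is sent over its fixed link; otherwise $p$ is assigned to $e(p):=e^*$ and split into chunks. Scheduler: at each integer $\tau\ge1$, build $M_\tau$ greedily over pending chunks in order of decreasing weight (ties by $\prec$ on packets, then arbitrary), adding $c$ iff no chunk already in $M_\tau$ has an edge adjacent to $e(c)$; chunks of $M_\tau$ are transmitted at step $\tau$. If chunk $c$ of $p$ is transmitted at step $\tau_c$ via $e(p)=(t,r)$, its completion time is $f_c=\tau_c+1+d(s_p,t)+d(r,d_p)$, and $c$ is active at integer times $\tau$ with $r_p\le\tau<f_c$. Dual variables $\beta$: for $t\in T$ and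 integer $\tau\ge1$, $\beta_{t,\tau}$ is the total weight of chunks active at $\tau$ whose assigned edge has transmitter $t$; for $r\in R$, $\beta_{r,\tau}$ is the total weight of chunks active at $\tau$ whose assigned edge has receiver $r$. *)

theory Defs
  imports Complex_Main
begin

(* A network instance together with the packet set.
   Sources, transmitters, receivers, destinations live in four distinct
   types 's, 't, 'r, 'd, so the four sets are automatically pairwise disjoint. *)
record ('s, 't, 'r, 'd, 'p) inst =
  srcs    :: "'s set"
  trans   :: "'t set"
  recvs   :: "'r set"
  dests   :: "'d set"
  src_of  :: "'t \<Rightarrow> 's"
  d_st    :: "'t \<Rightarrow> nat"
  dst_of  :: "'r \<Rightarrow> 'd"
  d_rd    :: "'r \<Rightarrow> nat"
  ER      :: "('t \<times> 'r) set"     (* reconfigurable edges *)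
  d_e     :: "('t \<times> 'r) \<Rightarrow> nat"
  EL      :: "('s \<times> 'd) set"     (* fixed links *)
  d_l     :: "('s \<times> 'd) \<Rightarrow> nat"
  packets :: "'p set"
  wt      :: "'p \<Rightarrow> real"
  rel     :: "'p \<Rightarrow> nat"
  psrc    :: "'p \<Rightarrow> 's"
  pdst    :: "'p \<Rightarrow> 'd"
  prec    :: "'p \<Rightarrow> 'p \<Rightarrow> bool"

definition Ep :: "('s, 't, 'r, 'd, 'p, 'z) inst_scheme \<Rightarrow> 'p \<Rightarrow> ('t \<times> 'r) set" where
  "Ep N p = {(t, r). (t, r) \<in> ER N \<and> src_of N t = psrc N p \<and> dst_of N r = pdst N p}"

definition Pi_l :: "('s, 't, 'r, 'd, 'p, 'z) inst_scheme \<Rightarrow> 'p set" where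
  "Pi_l N = {p \<in> packets N. (psrc N p, pdst N p) \<in> EL N}"

definition Delta :: "('s, 't, 'r, 'd, 'p, 'z) inst_scheme \<Rightarrow> ('t \<times> 'r) \<Rightarrow> nat" where
  "Delta N e = d_st N (fst e) + d_e N e + d_rd N (snd e)"

definition adj :: "('t \<times> 'r) \<Rightarrow> ('t \<times> 'r) \<Rightarrow> bool" where
  "adj e e' \<longleftrightarrow> fst e = fst e' \<or> snd e = snd e'"

definition wf_inst :: "('s, 't, 'r, 'd, 'p, 'z) inst_scheme \<Rightarrow> bool" where
  "wf_inst N \<longleftrightarrow>
     finite (srcs N) \<and> finite (trans N) \<and> finite (recvs N) \<and> finite (dests N) \<and>
     (\<forall>t\<in>trans N. src_of N t \<in> srcs N) \<and>
     (\<forall>r\<in>recvs N. dst_of N r \<in> dests N) \<and>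
     ER N \<subseteq> trans N \<times> recvs N \<and>
     (\<forall>e\<in>ER N. 1 \<le> d_e N e) \<and>
     EL N \<subseteq> srcs N \<times> dests N \<and>
     finite (packets N) \<and>
     (\<forall>p\<in>packets N. 0 < wt N p \<and> 1 \<le> rel N p \<and> psrc N p \<in> srcs N \<and>
                      pdst N p \<in> dests N \<and> Ep N p \<noteq> {}) \<and>
     (\<forall>p\<in>packets N. \<not> prec N p p) \<and>
     (\<forall>p\<in>packets N. \<forall>q\<in>packets N. \<forall>u\<in>packets N.
        prec N p q \<longrightarrow> prec N q u \<longrightarrow> prec N p u) \<and>
     (\<forall>p\<in>packets N. \<forall>q\<in>packets N. p \<noteq> q \<longrightarrow> prec N p q \<or> prec N q p) \<and>
     (\<forall>p\<in>packets N. \<forall>q\<in>packets N. rel N p < rel N q \<longrightarrow> prec N p q)"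

(* An execution: asg p = None means p was sent over its fixed link,
   asg p = Some e means p was assigned to the reconfigurable edge e.
   Chunks of p are the pairs (p, i) with i < d(e(p));
   tx c is the transmission step of chunk c. *)

definition chunks :: "('s, 't, 'r, 'd, 'p, 'z) inst_scheme \<Rightarrow> ('p \<Rightarrow> ('t \<times> 'r) option)
                      \<Rightarrow> ('p \<times> nat) set" where
  "chunks N asg = {(p, i). p \<in> packets N \<and> (\<exists>e. asg p = Some e \<and> i < d_e N e)}"

definition cedge :: "('p \<Rightarrow> ('t \<times> 'r) option) \<Rightarrow> ('p \<times> nat) \<Rightarrow> ('t \<times> 'r)" where
  "cedge asg c = the (asg (fst c))"

definition cw :: "('s, 't, 'r, 'd, 'p, 'z) inst_scheme \<Rightarrow> ('p \<Rightarrow> ('t \<times> 'r) option)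
                  \<Rightarrow> ('p \<times> nat) \<Rightarrow> real" where
  "cw N asg c = wt N (fst c) / real (d_e N (cedge asg c))"

(* B(p): pending chunks of packets p' \<prec> p when p is processed (before step r_p) *)
definition Bset :: "('s, 't, 'r, 'd, 'p, 'z) inst_scheme \<Rightarrow> ('p \<Rightarrow> ('t \<times> 'r) option)
                    \<Rightarrow> ('p \<times> nat \<Rightarrow> nat) \<Rightarrow> 'p \<Rightarrow> ('p \<times> nat) set" where
  "Bset N asg tx p = {c \<in> chunks N asg. prec N (fst c) p \<and> rel N p \<le> tx c}"

definition Adjset :: "('s, 't, 'r, 'd, 'p, 'z) inst_scheme \<Rightarrow> ('p \<Rightarrow> ('t \<times> 'r) option)
                    \<Rightarrow> ('p \<times> nat \<Rightarrow> nat) \<Rightarrow> 'p \<Rightarrow> ('t \<times> 'r) \<Rightarrow> ('p \<times> nat) set" where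
  "Adjset N asg tx p e = {c \<in> Bset N asg tx p. adj (cedge asg c) e}"

definition Hset :: "('s, 't, 'r, 'd, 'p, 'z) inst_scheme \<Rightarrow> ('p \<Rightarrow> ('t \<times> 'r) option)
                    \<Rightarrow> ('p \<times> nat \<Rightarrow> nat) \<Rightarrow> 'p \<Rightarrow> ('t \<times> 'r) \<Rightarrow> ('p \<times> nat) set" where
  "Hset N asg tx p e = {c \<in> Adjset N asg tx p e. wt N p / real (d_e N e) \<le> cw N asg c}"

definition Lset :: "('s, 't, 'r, 'd, 'p, 'z) inst_scheme \<Rightarrow> ('p \<Rightarrow> ('t \<times> 'r) option)
                    \<Rightarrow> ('p \<times> nat \<Rightarrow> nat) \<Rightarrow> 'p \<Rightarrow> ('t \<times> 'r) \<Rightarrow> ('p \<times> nat) set" where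
  "Lset N asg tx p e = Adjset N asg tx p e - Hset N asg tx p e"

definition imp :: "('s, 't, 'r, 'd, 'p, 'z) inst_scheme \<Rightarrow> ('p \<Rightarrow> ('t \<times> 'r) option)
                    \<Rightarrow> ('p \<times> nat \<Rightarrow> nat) \<Rightarrow> 'p \<Rightarrow> ('t \<times> 'r) \<Rightarrow> real" where
  "imp N asg tx p e =
     wt N p * (real (d_st N (fst e)) + (real (d_e N e) + 1) / 2 + real (d_rd N (snd e)))
     + wt N p * real (card (Hset N asg tx p e))
     + real (d_e N e) * (\<Sum>c\<in>Lset N asg tx p e. cw N asg c)"

definition pending :: "('s, 't, 'r, 'd, 'p, 'z) inst_scheme \<Rightarrow> ('p \<Rightarrow> ('t \<times> 'r) option)
                    \<Rightarrow> ('p \<times> nat \<Rightarrow> nat) \<Rightarrow> nat \<Rightarrow> ('p \<times> nat) set" where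
  "pending N asg tx \<tau> = {c \<in> chunks N asg. rel N (fst c) \<le> \<tau> \<and> \<tau> \<le> tx c}"

definition alg_assignment :: "('s, 't, 'r, 'd, 'p, 'z) inst_scheme \<Rightarrow> ('p \<Rightarrow> ('t \<times> 'r) option)
                    \<Rightarrow> ('p \<times> nat \<Rightarrow> nat) \<Rightarrow> bool" where
  "alg_assignment N asg tx \<longleftrightarrow>
     (\<forall>p\<in>packets N.
        (\<exists>e\<in>Ep N p. (\<forall>e'\<in>Ep N p. imp N asg tx p e \<le> imp N asg tx p e') \<and>
           (if p \<in> Pi_l N \<and> wt N p * real (d_l N (psrc N p, pdst N p)) \<le> imp N asg tx p e
            then asg p = None else asg p = Some e)))"

(* the greedy scheduler: at every step \<tau> \<ge> 1 the set of chunks transmitted at \<tau>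
   is the greedy matching built along some order L of the pending chunks that
   lists them by decreasing weight, ties broken by \<prec> on packets, then arbitrarily *)
definition alg_schedule :: "('s, 't, 'r, 'd, 'p, 'z) inst_scheme \<Rightarrow> ('p \<Rightarrow> ('t \<times> 'r) option)
                    \<Rightarrow> ('p \<times> nat \<Rightarrow> nat) \<Rightarrow> bool" where
  "alg_schedule N asg tx \<longleftrightarrow>
     (\<forall>c\<in>chunks N asg. rel N (fst c) \<le> tx c) \<and>
     (\<forall>\<tau>\<ge>1. \<exists>L :: ('p \<times> nat) \<Rightarrow> ('p \<times> nat) \<Rightarrow> bool.
        let P = pending N asg tx \<tau> in
        (\<forall>c\<in>P. \<not> L c c) \<and>
        (\<forall>a\<in>P. \<forall>b\<in>P. \<forall>c\<in>P. L a b \<longrightarrow> L b c \<longrightarrow> L a c) \<and>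
        (\<forall>a\<in>P. \<forall>b\<in>P. a \<noteq> b \<longrightarrow> L a b \<or> L b a) \<and>
        (\<forall>a\<in>P. \<forall>b\<in>P. (cw N asg a > cw N asg b \<or>
                         (cw N asg a = cw N asg b \<and> prec N (fst a) (fst b))) \<longrightarrow> L a b) \<and>
        {c \<in> P. tx c = \<tau>} =
          {c \<in> P. \<not> (\<exists>c'\<in>P. tx c' = \<tau> \<and> L c' c \<and> adj (cedge asg c') (cedge asg c))})"

definition alg_run :: "('s, 't, 'r, 'd, 'p, 'z) inst_scheme \<Rightarrow> ('p \<Rightarrow> ('t \<times> 'r) option)
                    \<Rightarrow> ('p \<times> nat \<Rightarrow> nat) \<Rightarrow> bool" where
  "alg_run N asg tx \<longleftrightarrow> alg_assignment N asg tx \<and> alg_schedule N asg tx"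

definition fin :: "('s, 't, 'r, 'd, 'p, 'z) inst_scheme \<Rightarrow> ('p \<Rightarrow> ('t \<times> 'r) option)
                    \<Rightarrow> ('p \<times> nat \<Rightarrow> nat) \<Rightarrow> ('p \<times> nat) \<Rightarrow> nat" where
  "fin N asg tx c = tx c + 1 + d_st N (fst (cedge asg c)) + d_rd N (snd (cedge asg c))"

definition active :: "('s, 't, 'r, 'd, 'p, 'z) inst_scheme \<Rightarrow> ('p \<Rightarrow> ('t \<times> 'r) option)
                    \<Rightarrow> ('p \<times> nat \<Rightarrow> nat) \<Rightarrow> ('p \<times> nat) \<Rightarrow> nat \<Rightarrow> bool" where
  "active N asg tx c \<tau> \<longleftrightarrow> rel N (fst c) \<le> \<tau> \<and> \<tau> < fin N asg tx c"

definition beta_t :: "('s, 't, 'r, 'd, 'p, 'z) inst_scheme \<Rightarrow> ('p \<Rightarrow> ('t \<times> 'r) option)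
                    \<Rightarrow> ('p \<times> nat \<Rightarrow> nat) \<Rightarrow> 't \<Rightarrow> nat \<Rightarrow> real" where
  "beta_t N asg tx t \<tau> =
     (\<Sum>c\<in>{c \<in> chunks N asg. active N asg tx c \<tau> \<and> fst (cedge asg c) = t}. cw N asg c)"

definition beta_r :: "('s, 't, 'r, 'd, 'p, 'z) inst_scheme \<Rightarrow> ('p \<Rightarrow> ('t \<times> 'r) option)
                    \<Rightarrow> ('p \<times> nat \<Rightarrow> nat) \<Rightarrow> 'r \<Rightarrow> nat \<Rightarrow> real" where
  "beta_r N asg tx r \<tau> =
     (\<Sum>c\<in>{c \<in> chunks N asg. active N asg tx c \<tau> \<and> snd (cedge asg c) = r}. cw N asg c)"

end

theory Submission
  imports Defs
begin

lemma finite_chunks: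
  assumes "wf_inst N" shows "finite (chunks N asg)"
proof -
  have "chunks N asg \<subseteq> (SIGMA p:packets N. {..< d_e N (the (asg p))})"
    by (auto simp: chunks_def)
  moreover have "finite (SIGMA p:packets N. {..< d_e N (the (asg p))})"
    using assms by (auto simp: wf_inst_def intro!: finite_SigmaI)
  ultimately show ?thesis by (rule finite_subset)
qed

lemma sched_nonadj:
  assumes "alg_schedule N asg tx" "1 \<le> \<sigma>"
    "a \<in> pending N asg tx \<sigma>" "b \<in> pending N asg tx \<sigma>" "tx a = \<sigma>" "tx b = \<sigma>" "a \<noteq> b"
  shows "\<not> adj (cedge asg a) (cedge asg b)"
proof
  assume ad: "adj (cedge asg a) (cedge asg b)"
  define P where "P = pending N asg tx \<sigma>"
  have "\<exists>L. let P = pending N asg tx \<sigma> in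
        (\<forall>c\<in>P. \<not> L c c) \<and>
        (\<forall>a\<in>P. \<forall>b\<in>P. \<forall>c\<in>P. L a b \<longrightarrow> L b c \<longrightarrow> L a c) \<and>
        (\<forall>a\<in>P. \<forall>b\<in>P. a \<noteq> b \<longrightarrow> L a b \<or> L b a) \<and>
        (\<forall>a\<in>P. \<forall>b\<in>P. (cw N asg a > cw N asg b \<or>
                         (cw N asg a = cw N asg b \<and> prec N (fst a) (fst b))) \<longrightarrow> L a b) \<and>
        {c \<in> P. tx c = \<sigma>} =
          {c \<in> P. \<not> (\<exists>c'\<in>P. tx c' = \<sigma> \<and> L c' c \<and> adj (cedge asg c') (cedge asg c))}"
    by (rule conjunct2[OF assms(1)[unfolded alg_schedule_def], rule_format, OF assms(2)])
  then obtain L where LL0: "let P = pending N asg tx \<sigma> in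
        (\<forall>c\<in>P. \<not> L c c) \<and>
        (\<forall>a\<in>P. \<forall>b\<in>P. \<forall>c\<in>P. L a b \<longrightarrow> L b c \<longrightarrow> L a c) \<and>
        (\<forall>a\<in>P. \<forall>b\<in>P. a \<noteq> b \<longrightarrow> L a b \<or> L b a) \<and>
        (\<forall>a\<in>P. \<forall>b\<in>P. (cw N asg a > cw N asg b \<or>
                         (cw N asg a = cw N asg b \<and> prec N (fst a) (fst b))) \<longrightarrow> L a b) \<and>
        {c \<in> P. tx c = \<sigma>} =
          {c \<in> P. \<not> (\<exists>c'\<in>P. tx c' = \<sigma> \<and> L c' c \<and> adj (cedge asg c') (cedge asg c))}" by (rule exE)
  then have LL: "(\<forall>a\<in>P. \<forall>b\<in>P. a \<noteq> b \<longrightarrow> L a b \<or> L b a) \<and>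
        {c \<in> P. tx c = \<sigma>} =
          {c \<in> P. \<not> (\<exists>c'\<in>P. tx c' = \<sigma> \<and> L c' c \<and> adj (cedge asg c') (cedge asg c))}"
    unfolding Let_def P_def by blast
  from LL have tot: "\<forall>a\<in>P. \<forall>b\<in>P. a \<noteq> b \<longrightarrow> L a b \<or> L b a" by (rule conjunct1)
  from LL have eq: "{c \<in> P. tx c = \<sigma>} =
          {c \<in> P. \<not> (\<exists>c'\<in>P. tx c' = \<sigma> \<and> L c' c \<and> adj (cedge asg c') (cedge asg c))}" by (rule conjunct2)
  have aP: "a \<in> P" and bP: "b \<in> P" using assms by (simp_all add: P_def)
  have sym: "adj (cedge asg b) (cedge asg a)" using ad by (auto simp: adj_def)
  from tot aP bP assms(7) have "L a b \<or> L b a" by blast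
  then show False
  proof
    assume lab: "L a b"
    have "b \<in> {c \<in> P. tx c = \<sigma>}" using bP assms(6) by simp
    then have "b \<in> {c \<in> P. \<not> (\<exists>c'\<in>P. tx c' = \<sigma> \<and> L c' c \<and> adj (cedge asg c') (cedge asg c))}"
      by (simp only: eq)
    then show False using aP assms(5) lab ad by blast
  next
    assume lab: "L b a"
    have "a \<in> {c \<in> P. tx c = \<sigma>}" using aP assms(5) by simp
    then have "a \<in> {c \<in> P. \<not> (\<exists>c'\<in>P. tx c' = \<sigma> \<and> L c' c \<and> adj (cedge asg c') (cedge asg c))}"
      by (simp only: eq)
    then show False using bP assms(6) lab sym by blast
  qed
qed

theorem mainTheorem5:
  fixes N :: "('s, 't, 'r, 'd, 'p) inst"
    and asg :: "'p \<Rightarrow> ('t \<times> 'r) option"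
    and tx :: "'p \<times> nat \<Rightarrow> nat"
  assumes "wf_inst N"
    and "alg_run N asg tx"
    and "p \<in> packets N"
    and "(t, r) \<in> Ep N p"
    and "rel N p \<le> \<tau>"
  shows "imp N asg tx p (t, r) - real (d_e N (t, r)) * (beta_t N asg tx t \<tau> + beta_r N asg tx r \<tau>)
           \<le> 2 * wt N p * (real \<tau> + real (Delta N (t, r)) - real (rel N p))"
proof -
  note wf = assms(1)
  have sched: "alg_schedule N asg tx" using assms(2) by (simp add: alg_run_def)
  define e where "e = (t, r)"
  define d where "d = d_e N e"
  define w where "w = wt N p"
  define A where "A = Adjset N asg tx p e"
  define H where "H = Hset N asg tx p e"
  define Lo where "Lo = Lset N asg tx p e"
  define act where "act = {c\<in>A. active N asg tx c \<tau>}"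
  define A0 where "A0 = {c\<in>A. tx c < \<tau>}"
  define cwf where "cwf = cw N asg"
  have eER: "e \<in> ER N" using assms(4) by (simp add: e_def Ep_def)
  have d1: "1 \<le> d" using wf eER by (simp add: wf_inst_def d_def)
  have wpos: "0 < w" using wf assms(3) by (simp add: wf_inst_def w_def)
  have rp1: "1 \<le> rel N p" using wf assms(3) by (simp add: wf_inst_def)
  have finC: "finite (chunks N asg)" using wf by (rule finite_chunks)
  have AC: "A \<subseteq> chunks N asg" by (auto simp: A_def Adjset_def Bset_def)
  have finA: "finite A" using finC AC finite_subset by blast
  have HA: "H \<subseteq> A" by (auto simp: H_def A_def Hset_def)
  have LoA: "Lo = A - H" by (simp add: Lo_def A_def H_def Lset_def)
  have Amem: "c \<in> chunks N asg \<and> prec N (fst c) p \<and> rel N p \<le> tx c \<and> adj (cedge asg c) e"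
    if "c \<in> A" for c using that by (auto simp: A_def Adjset_def Bset_def)
  have cwnn: "0 \<le> cwf c" if "c \<in> chunks N asg" for c
  proof -
    have "fst c \<in> packets N" using that by (auto simp: chunks_def)
    then have "0 < wt N (fst c)" using wf by (simp add: wf_inst_def)
    then show ?thesis by (simp add: cwf_def cw_def)
  qed
  have relle: "rel N (fst c) \<le> rel N p" if "c \<in> A" for c
  proof (rule ccontr)
    assume "\<not> ?thesis"
    then have lt: "rel N p < rel N (fst c)" by simp
    have fp: "fst c \<in> packets N" using Amem[OF that] by (auto simp: chunks_def)
    have "prec N p (fst c)" using wf assms(3) fp lt unfolding wf_inst_def by blast
    moreover have "prec N (fst c) p" using Amem[OF that] by blast
    ultimately have "prec N p p" using wf assms(3) fp unfolding wf_inst_def by blast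
    then show False using wf assms(3) unfolding wf_inst_def by blast
  qed
  have Adiff: "A - act \<subseteq> A0"
  proof
    fix c assume c: "c \<in> A - act"
    show "c \<in> A0"
    proof (rule ccontr)
      assume "c \<notin> A0"
      then have "\<tau> \<le> tx c" using c by (auto simp: A0_def)
      then have "active N asg tx c \<tau>" using relle[of c] c assms(5)
        by (auto simp: active_def fin_def)
      then show False using c by (auto simp: act_def)
    qed
  qed
  define St where "St = {c \<in> chunks N asg. active N asg tx c \<tau> \<and> fst (cedge asg c) = t}"
  define Sr where "Sr = {c \<in> chunks N asg. active N asg tx c \<tau> \<and> snd (cedge asg c) = r}"
  have finSt: "finite St" using finC by (auto simp: St_def)
  have finSr: "finite Sr" using finC by (auto simp: Sr_def)
  have actS: "act \<subseteq> St \<union> Sr"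
    using Amem by (auto simp: act_def St_def Sr_def adj_def e_def)
  have "sum cwf act \<le> sum cwf (St \<union> Sr)"
    by (rule sum_mono2) (use finSt finSr actS cwnn in \<open>auto simp: St_def Sr_def\<close>)
  also have "\<dots> \<le> sum cwf St + sum cwf Sr"
  proof -
    have "sum cwf (St \<union> Sr) + sum cwf (St \<inter> Sr) = sum cwf St + sum cwf Sr"
      by (rule sum.union_inter[OF finSt finSr])
    moreover have "0 \<le> sum cwf (St \<inter> Sr)"
      by (rule sum_nonneg) (use cwnn in \<open>auto simp: St_def\<close>)
    ultimately show ?thesis by linarith
  qed
  also have "\<dots> = beta_t N asg tx t \<tau> + beta_r N asg tx r \<tau>"
    by (simp add: St_def Sr_def beta_t_def beta_r_def cwf_def)
  finally have betab: "sum cwf act \<le> beta_t N asg tx t \<tau> + beta_r N asg tx r \<tau>" .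
  define f where "f c = (if c \<in> H then w else real d * cwf c)" for c
  have sumf: "w * real (card H) + real d * sum cwf Lo = sum f A"
  proof -
    have "sum f A = sum f H + sum f (A - H)"
      using finA HA by (simp add: sum.subset_diff)
    moreover have "sum f H = w * real (card H)" by (simp add: f_def)
    moreover have "sum f (A - H) = real d * sum cwf (A - H)"
      by (simp add: f_def sum_distrib_left)
    ultimately show ?thesis using LoA by simp
  qed
  have fle1: "f c \<le> real d * cwf c" if "c \<in> A" for c
  proof (cases "c \<in> H")
    case True
    then have "w / real d \<le> cwf c" by (simp add: H_def Hset_def w_def d_def cwf_def)
    then have "w \<le> real d * cwf c" using d1 by (simp add: field_simps)
    then show ?thesis using True by (simp add: f_def)
  qed (simp add: f_def)
  have fle2: "f c \<le> w" if "c \<in> A" for c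
  proof (cases "c \<in> H")
    case False
    then have "\<not> w / real d \<le> cwf c" using that
      by (simp add: H_def A_def Hset_def w_def d_def cwf_def)
    then have "real d * cwf c < w" using d1 by (simp add: field_simps)
    then show ?thesis using False by (simp add: f_def)
  qed (simp add: f_def)
  have actA: "act \<subseteq> A" by (auto simp: act_def)
  have finA0: "finite A0" using finA by (auto simp: A0_def)
  have "sum f A = sum f act + sum f (A - act)"
    using finA actA by (simp add: sum.subset_diff)
  also have "sum f act \<le> real d * sum cwf act"
    unfolding sum_distrib_left by (rule sum_mono) (use fle1 actA in auto)
  also have "sum f (A - act) \<le> w * real (card (A - act))"
    using sum_bounded_above[of "A - act" f w] fle2 by (auto simp: mult.commute)
  also have "w * real (card (A - act)) \<le> w * real (card A0)"
    using wpos card_mono[OF finA0 Adiff] by simp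
  finally have fb: "sum f A \<le> real d * sum cwf act + w * real (card A0)" by simp
  define X where "X \<sigma> = {c\<in>A. tx c = \<sigma>}" for \<sigma>
  have X2: "card (X \<sigma>) \<le> 2" if s: "rel N p \<le> \<sigma>" for \<sigma>
  proof -
    have pend: "c \<in> pending N asg tx \<sigma>" if "c \<in> X \<sigma>" for c
      using that Amem relle s by (fastforce simp: X_def pending_def)
    have s1: "1 \<le> \<sigma>" using s rp1 by simp
    have eqq: "a = b" if "a \<in> X \<sigma>" "b \<in> X \<sigma>" "adj (cedge asg a) (cedge asg b)" for a b
      using sched_nonadj[OF sched s1 pend[OF that(1)] pend[OF that(2)]] that
      by (auto simp: X_def)
    define Xt where "Xt = {c\<in>X \<sigma>. fst (cedge asg c) = t}"
    define Xr where "Xr = {c\<in>X \<sigma>. snd (cedge asg c) = r}"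
    have finX: "finite (X \<sigma>)" using finA by (auto simp: X_def)
    have "X \<sigma> \<subseteq> Xt \<union> Xr" using Amem by (auto simp: X_def Xt_def Xr_def adj_def e_def)
    then have "card (X \<sigma>) \<le> card (Xt \<union> Xr)"
      by (rule card_mono[rotated]) (use finX in \<open>auto simp: Xt_def Xr_def\<close>)
    also have "\<dots> \<le> card Xt + card Xr" by (rule card_Un_le)
    also have "card Xt \<le> 1"
    proof -
      have fin: "finite Xt" using finX by (simp add: Xt_def)
      have "\<forall>a\<in>Xt. \<forall>b\<in>Xt. a = b"
      proof (intro ballI)
        fix a b assume "a \<in> Xt" "b \<in> Xt"
        then have "a \<in> X \<sigma>" "b \<in> X \<sigma>" "adj (cedge asg a) (cedge asg b)"
          unfolding Xt_def adj_def by auto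
        then show "a = b" by (rule eqq)
      qed
      then show ?thesis using fin card_le_Suc0_iff_eq by fastforce
    qed
    also have "card Xr \<le> 1"
    proof -
      have fin: "finite Xr" using finX by (simp add: Xr_def)
      have "\<forall>a\<in>Xr. \<forall>b\<in>Xr. a = b"
      proof (intro ballI)
        fix a b assume "a \<in> Xr" "b \<in> Xr"
        then have "a \<in> X \<sigma>" "b \<in> X \<sigma>" "adj (cedge asg a) (cedge asg b)"
          unfolding Xr_def adj_def by auto
        then show "a = b" by (rule eqq)
      qed
      then show ?thesis using fin card_le_Suc0_iff_eq by fastforce
    qed
    finally show ?thesis by simp
  qed
  have "A0 = (\<Union>\<sigma>\<in>{rel N p..<\<tau>}. X \<sigma>)"
    using Amem by (auto simp: A0_def X_def)
  then have "card A0 \<le> (\<Sum>\<sigma>\<in>{rel N p..<\<tau>}. card (X \<sigma>))"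
    using card_UN_le[of "{rel N p..<\<tau>}" X] by simp
  also have "\<dots> \<le> (\<Sum>\<sigma>\<in>{rel N p..<\<tau>}. 2)"
    by (rule sum_mono) (use X2 in auto)
  finally have cA0: "card A0 \<le> 2 * (\<tau> - rel N p)" by simp
  have cA0r: "real (card A0) \<le> 2 * (real \<tau> - real (rel N p))"
    using cA0 assms(5) by (simp add: of_nat_diff)
  have impeq: "imp N asg tx p (t, r) = w * (real (d_st N t) + (real d + 1) / 2 + real (d_rd N r)) + sum f A"
    using sumf by (simp add: imp_def e_def d_def w_def H_def Lo_def cwf_def)
  have Deq: "real (Delta N (t, r)) = real (d_st N t) + real d + real (d_rd N r)"
    by (simp add: Delta_def d_def e_def)
  have t1: "w * (real (d_st N t) + (real d + 1) / 2 + real (d_rd N r)) \<le> w * real (Delta N (t, r))"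
    using Deq d1 wpos by (intro mult_left_mono) auto
  have t2: "real d * sum cwf act \<le> real d * (beta_t N asg tx t \<tau> + beta_r N asg tx r \<tau>)"
    using betab by (intro mult_left_mono) auto
  have t3: "w * real (card A0) \<le> w * (2 * (real \<tau> - real (rel N p)))"
    using cA0r wpos by (intro mult_left_mono) auto
  have t4: "0 \<le> w * real (Delta N (t, r))" using wpos by simp
  have "imp N asg tx p (t, r) - real (d_e N (t, r)) * (beta_t N asg tx t \<tau> + beta_r N asg tx r \<tau>)
     \<le> w * real (Delta N (t, r)) + w * (2 * (real \<tau> - real (rel N p)))"
    using impeq fb t1 t2 t3 by (simp add: d_def e_def)
  also have "\<dots> \<le> 2 * w * (real \<tau> + real (Delta N (t, r)) - real (rel N p))"
    using t4 by (simp add: algebra_simps)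
  finally show ?thesis by (simp add: w_def)
qed

end
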